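(* For every $n\in\mathbb{N}$, $F(\mathbb{A}^{(n)})\cong\mathbb{A}^n$, and $F(\mathbb{A}^{( * )})\cong\mathbb{A}^*$, as nominal $\mathrm{Sb}$-sets.
   Context: $\mathbb{A}$ is a countably infinite set of atoms; $\mathrm{Sb}$ is the monoid of functions $\mathbb{A}\to\mathbb{A}$ that are the identity outside a finite set, $\mathrm{Perm}$ its bijections. $\mathbb{A}$ is a nominal $\mathrm{Sb}$-set (and $\mathrm{Perm}$-set) via $m\cdot a=m(a)$. $\mathbb{A}^{(n)}$ is the nominal $\mathrm{Perm}$-set of words of length $n$ with pairwise distinct letters, $\mathbb{A}^{( * )}=\coprod_n\mathbb{A}^{(n)}$; $\mathbb{A}^n$ and $\mathbb{A}^*=\coprod_n\mathbb{A}^n$ carry the pointwise $\mathrm{Sb}$-action. For a nominal $\mathrm{Perm}$-set $X$ (every element $x$ has a finite set $C$ with $g|_C=g'|_C\Rightarrow gx=g'x$), $F(X)=(\mathrm{Sb}\times X)/{\sim}$, where $\sim$ is the least equivalence containing $(m,gx)\sim(mg,x)$ for $g\in\mathrm{Perm}$ and $(m,x)\sim(m',x)$ whenever $m|_C=m'|_C$ for such a support $C$ of $x$; the $\mathrm{Sb}$-action is $n\cdot[m,x]=[nm,x]$. *)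

theory Defs
  imports Main "HOL-Library.Countable"
begin

definition Sb :: "('a \<Rightarrow> 'a) set" where
  "Sb = {m. finite {a. m a \<noteq> a}}"

definition Perm :: "('a \<Rightarrow> 'a) set" where
  "Perm = {g \<in> Sb. bij g}"

definition supports :: "(('a \<Rightarrow> 'a) \<Rightarrow> 'x \<Rightarrow> 'x) \<Rightarrow> 'a set \<Rightarrow> 'x \<Rightarrow> bool" where
  "supports act C x \<longleftrightarrow> finite C \<and>
     (\<forall>g\<in>Perm. \<forall>g'\<in>Perm. (\<forall>a\<in>C. g a = g' a) \<longrightarrow> act g x = act g' x)"

definition F_gen :: "'x set \<Rightarrow> (('a \<Rightarrow> 'a) \<Rightarrow> 'x \<Rightarrow> 'x)
    \<Rightarrow> ((('a \<Rightarrow> 'a) \<times> 'x) \<times> (('a \<Rightarrow> 'a) \<times> 'x)) set" where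
  "F_gen X act =
     {((m, act g x), (m \<circ> g, x)) | m g x. m \<in> Sb \<and> g \<in> Perm \<and> x \<in> X}
   \<union> {((m, x), (m', x)) | m m' x C. m \<in> Sb \<and> m' \<in> Sb \<and> x \<in> X \<and>
        supports act C x \<and> (\<forall>a\<in>C. m a = m' a)}"

definition F_rel :: "'x set \<Rightarrow> (('a \<Rightarrow> 'a) \<Rightarrow> 'x \<Rightarrow> 'x)
    \<Rightarrow> ((('a \<Rightarrow> 'a) \<times> 'x) \<times> (('a \<Rightarrow> 'a) \<times> 'x)) set" where
  "F_rel X act = Id_on (Sb \<times> X) \<union> (F_gen X act \<union> (F_gen X act)\<inverse>)\<^sup>+"

definition F_carrier :: "'x set \<Rightarrow> (('a \<Rightarrow> 'a) \<Rightarrow> 'x \<Rightarrow> 'x)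
    \<Rightarrow> (('a \<Rightarrow> 'a) \<times> 'x) set set" where
  "F_carrier X act = (Sb \<times> X) // F_rel X act"

definition F_act :: "'x set \<Rightarrow> (('a \<Rightarrow> 'a) \<Rightarrow> 'x \<Rightarrow> 'x)
    \<Rightarrow> ('a \<Rightarrow> 'a) \<Rightarrow> (('a \<Rightarrow> 'a) \<times> 'x) set \<Rightarrow> (('a \<Rightarrow> 'a) \<times> 'x) set" where
  "F_act X act n c = (\<Union>p\<in>c. F_rel X act `` {(n \<circ> fst p, snd p)})"

definition sb_iso :: "'x set \<Rightarrow> (('a \<Rightarrow> 'a) \<Rightarrow> 'x \<Rightarrow> 'x)
    \<Rightarrow> 'y set \<Rightarrow> (('a \<Rightarrow> 'a) \<Rightarrow> 'y \<Rightarrow> 'y) \<Rightarrow> bool" where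
  "sb_iso X actX Y actY \<longleftrightarrow>
     (\<exists>f. bij_betw f X Y \<and> (\<forall>m\<in>Sb. \<forall>x\<in>X. f (actX m x) = actY m (f x)))"

definition A_dist :: "nat \<Rightarrow> 'a list set" where
  "A_dist n = {w. length w = n \<and> distinct w}"

definition A_dist_star :: "'a list set" where
  "A_dist_star = {w. distinct w}"

definition A_pow :: "nat \<Rightarrow> 'a list set" where
  "A_pow n = {w. length w = n}"

definition A_star :: "'a list set" where
  "A_star = UNIV"

definition word_act :: "('a \<Rightarrow> 'a) \<Rightarrow> 'a list \<Rightarrow> 'a list" where
  "word_act m w = map m w"

end

theory Submission
  imports Defs
begin

definition tr :: "'a \<Rightarrow> 'a \<Rightarrow> 'a \<Rightarrow> 'a" where
  "tr a b c = (if c = a then b else if c = b then a else c)"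

lemma tr_inv: "tr a b (tr a b c) = c" by (simp add: tr_def)

lemma bij_tr: "bij (tr a b)"
  by (metis bijI' tr_inv)

lemma Sb_id: "id \<in> Sb" by (simp add: Sb_def)

lemma Sb_comp: assumes "m \<in> Sb" "m' \<in> Sb" shows "m \<circ> m' \<in> Sb"
proof -
  have sub: "{a. (m \<circ> m') a \<noteq> a} \<subseteq> {a. m' a \<noteq> a} \<union> {a. m a \<noteq> a}" by auto
  have "finite ({a. m' a \<noteq> a} \<union> {a. m a \<noteq> a})" using assms by (simp add: Sb_def)
  then have "finite {a. (m \<circ> m') a \<noteq> a}" by (rule finite_subset[OF sub])
  then show ?thesis by (simp add: Sb_def)
qed

lemma Perm_id: "id \<in> Perm" by (simp add: Perm_def Sb_id)

lemma Perm_comp: "g \<in> Perm \<Longrightarrow> g' \<in> Perm \<Longrightarrow> g \<circ> g' \<in> Perm"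
  unfolding Perm_def by (auto simp: Sb_comp bij_comp)

lemma Perm_transpose: "tr a b \<in> Perm"
proof -
  have sub: "{c. tr a b c \<noteq> c} \<subseteq> {a, b}"
    by (auto simp: tr_def)
  have "finite {c. tr a b c \<noteq> c}" by (rule finite_subset[OF sub]) simp
  then show ?thesis unfolding Perm_def Sb_def using bij_tr by simp
qed

lemma supports_set:
  assumes inf: "infinite (UNIV :: 'a set)"
    and s: "supports word_act C (x :: 'a list)"
  shows "set x \<subseteq> C"
proof
  fix a assume a: "a \<in> set x"
  show "a \<in> C"
  proof (rule ccontr)
    assume aC: "a \<notin> C"
    have fin: "finite (C \<union> set x)" using s by (simp add: supports_def)
    obtain b where b: "b \<notin> C \<union> set x" using ex_new_if_finite[OF inf fin] by blast
    let ?g = "tr a b"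
    have ag: "\<forall>c\<in>C. ?g c = id c" using aC b by (auto simp: tr_def)
    have sp: "\<forall>g\<in>Perm. \<forall>g'\<in>Perm. (\<forall>a\<in>C. g a = g' a) \<longrightarrow> word_act g x = word_act g' x"
      using s unfolding supports_def by (rule conjunct2)
    have "word_act ?g x = word_act id x"
      using sp Perm_transpose[of a b] Perm_id ag by blast
    then have mx: "map ?g x = x" by (simp add: word_act_def)
    have "?g a = b" by (simp add: tr_def)
    then have "b \<in> set (map ?g x)" using a by (metis image_eqI set_map)
    then show False using b mx by simp
  qed
qed

lemma perm_exists:
  "distinct w \<Longrightarrow> distinct w' \<Longrightarrow> length w = length w' \<Longrightarrow> \<exists>g\<in>Perm. map g w = (w' :: 'a list)"
proof (induction w arbitrary: w')
  case Nil
  then show ?case using Perm_id by auto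
next
  case (Cons x ws)
  obtain y ws' where w': "w' = y # ws'" using Cons.prems(3) by (cases w') auto
  have d1: "x \<notin> set ws" "distinct ws" using Cons.prems(1) by auto
  have d2: "y \<notin> set ws'" "distinct ws'" using Cons.prems(2) w' by auto
  have l: "length ws = length ws'" using Cons.prems(3) w' by simp
  obtain g where g: "g \<in> Perm" "map g ws = ws'" using Cons.IH[OF d1(2) d2(2) l] by blast
  let ?h = "tr (g x) y \<circ> g"
  have hP: "?h \<in> Perm" using Perm_comp[OF Perm_transpose g(1)] .
  have "\<forall>a\<in>set ws. ?h a = g a"
  proof
    fix a assume a: "a \<in> set ws"
    have "bij g" using g by (simp add: Perm_def)
    have "a \<noteq> x" using a d1 by auto
    then have n1: "g a \<noteq> g x" using \<open>bij g\<close> by (simp add: bij_is_inj inj_eq)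
    have "g a \<in> set ws'" using a g(2) by (metis image_eqI set_map)
    then have n2: "g a \<noteq> y" using d2 by auto
    show "?h a = g a" using n1 n2 by (simp add: tr_def)
  qed
  then have "map ?h ws = map g ws" by (simp add: map_eq_conv)
  then have "map ?h ws = ws'" using g by simp
  moreover have "?h x = y" by (simp add: tr_def)
  ultimately have "map ?h (x # ws) = w'" using w' by simp
  then show ?case using hP by blast
qed

lemma map_to:
  "distinct (w :: 'a list) \<Longrightarrow> length w = length v \<Longrightarrow>
   map (\<lambda>a. case map_of (zip w v) a of None \<Rightarrow> a | Some b \<Rightarrow> b) w = v"
proof (induction w arbitrary: v)
  case Nil then show ?case by simp
next
  case (Cons x ws)
  then obtain y vs where v: "v = y # vs" by (cases v) auto
  have "map (\<lambda>a. case map_of (zip (x#ws) v) a of None \<Rightarrow> a | Some b \<Rightarrow> b) ws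
      = map (\<lambda>a. case map_of (zip ws vs) a of None \<Rightarrow> a | Some b \<Rightarrow> b) ws"
    using Cons.prems v by (intro map_cong) auto
  also have "\<dots> = vs" using Cons v by simp
  finally show ?case using v by simp
qed

lemma map_to_Sb:
  "(\<lambda>a. case map_of (zip w v) a of None \<Rightarrow> a | Some b \<Rightarrow> b) \<in> Sb"
proof -
  have sub: "{a. (case map_of (zip w v) a of None \<Rightarrow> a | Some b \<Rightarrow> b) \<noteq> a} \<subseteq> set w"
    by (auto split: option.splits dest: map_of_SomeD set_zip_leftD)
  have "finite {a. (case map_of (zip w v) a of None \<Rightarrow> a | Some b \<Rightarrow> b) \<noteq> a}"
    by (rule finite_subset[OF sub]) simp
  then show ?thesis unfolding Sb_def by simp
qed


lemma F_gen_sub: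
  assumes cl: "\<forall>g\<in>Perm. \<forall>x\<in>X. map g x \<in> X"
  shows "F_gen X word_act \<subseteq> (Sb \<times> X) \<times> (Sb \<times> X)"
  using cl unfolding F_gen_def word_act_def
  by (auto simp: Perm_def intro: Sb_comp)

lemma F_rel_sub:
  assumes cl: "\<forall>g\<in>Perm. \<forall>x\<in>X. map g x \<in> X"
  shows "F_rel X word_act \<subseteq> (Sb \<times> X) \<times> (Sb \<times> X)"
proof -
  have "F_gen X word_act \<union> (F_gen X word_act)\<inverse> \<subseteq> (Sb \<times> X) \<times> (Sb \<times> X)"
    using F_gen_sub[OF cl] by auto
  then have "(F_gen X word_act \<union> (F_gen X word_act)\<inverse>)\<^sup>+ \<subseteq> (Sb \<times> X) \<times> (Sb \<times> X)"
    by (metis trancl_subset_Sigma)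
  moreover have "Id_on (Sb \<times> X) \<subseteq> (Sb \<times> X) \<times> (Sb \<times> X)" by (rule Id_on_subset_Times)
  ultimately show ?thesis unfolding F_rel_def by blast
qed

lemma F_rel_equiv:
  assumes cl: "\<forall>g\<in>Perm. \<forall>x\<in>X. map g x \<in> X"
  shows "equiv (Sb \<times> X) (F_rel X word_act)"
proof (rule equivI)
  let ?R = "F_gen X word_act \<union> (F_gen X word_act)\<inverse>"
  show "refl_on (Sb \<times> X) (F_rel X word_act)"
    using F_rel_sub[OF cl] unfolding refl_on_def F_rel_def by auto
  show "F_rel X word_act \<subseteq> (Sb \<times> X) \<times> (Sb \<times> X)" by (rule F_rel_sub[OF cl])
  have s: "sym (?R\<^sup>+)" by (intro sym_trancl sym_Un_converse)
  show "sym (F_rel X word_act)" unfolding F_rel_def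
    using s by (auto simp: sym_def)
  show "trans (F_rel X word_act)" unfolding F_rel_def
  proof (rule transI)
    fix x y z
    assume xy: "(x, y) \<in> Id_on (Sb \<times> X) \<union> ?R\<^sup>+" and yz: "(y, z) \<in> Id_on (Sb \<times> X) \<union> ?R\<^sup>+"
    show "(x, z) \<in> Id_on (Sb \<times> X) \<union> ?R\<^sup>+"
      using xy yz unfolding Id_on_def by (blast intro: trancl_trans)
  qed
qed

lemma F_rel_inv:
  assumes inf: "infinite (UNIV :: 'a set)"
    and pq: "(p, q) \<in> F_rel X word_act"
  shows "map (fst p) (snd p :: 'a list) = map (fst q) (snd q)"
proof -
  let ?h = "\<lambda>p::('a \<Rightarrow> 'a) \<times> 'a list. map (fst p) (snd p)"
  have g: "?h a = ?h b" if "(a, b) \<in> F_gen X word_act" for a b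
  proof -
    from that show ?thesis unfolding F_gen_def
    proof (elim UnE CollectE exE conjE)
      fix m g x assume "(a, b) = ((m, word_act g x), m \<circ> g, x)"
      then show ?thesis by (simp add: word_act_def)
    next
      fix m m' x C assume e: "(a, b) = ((m, x), m', x)" and s: "supports word_act C x"
        and mm: "\<forall>a\<in>C. m a = m' a"
      have "set x \<subseteq> C" using supports_set[OF inf s] .
      then show ?thesis using e mm by (auto intro: map_cong)
    qed
  qed
  have "?h a = ?h b" if "(a, b) \<in> (F_gen X word_act \<union> (F_gen X word_act)\<inverse>)\<^sup>+" for a b
    using that
  proof (induction rule: trancl_induct)
    case (base y)
    then have "(a, y) \<in> F_gen X word_act \<or> (y, a) \<in> F_gen X word_act" by blast
    then show ?case using g[of a y] g[of y a] by auto
  next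
    case (step y z)
    have "(y, z) \<in> F_gen X word_act \<or> (z, y) \<in> F_gen X word_act" using step.hyps(2) by blast
    then have "?h y = ?h z" using g[of y z] g[of z y] by auto
    then show ?case using step.IH by simp
  qed
  then show ?thesis using pq unfolding F_rel_def by auto
qed

lemma F_rel_intro:
  assumes Xd: "\<forall>w\<in>X. distinct w" and cl: "\<forall>g\<in>Perm. \<forall>x\<in>X. map g x \<in> X"
    and m: "m \<in> Sb" and w: "w \<in> X" and m': "m' \<in> Sb" and w': "w' \<in> X"
    and eq: "map m w = map m' (w' :: 'a list)"
  shows "((m, w), (m', w')) \<in> F_rel X word_act"
proof -
  have "length w = length w'" using eq by (metis length_map)
  then obtain g where g: "g \<in> Perm" "map g w = w'" using perm_exists Xd w w' by blast
  have gen1: "((m', w'), (m' \<circ> g, w)) \<in> F_gen X word_act"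
    unfolding F_gen_def using m' g w by (auto simp: word_act_def)
  have sup: "supports word_act (set w) w"
    unfolding supports_def word_act_def by auto
  have agree: "\<forall>a\<in>set w. (m' \<circ> g) a = m a"
  proof -
    have "map m' (map g w) = map m w" using eq g by simp
    then have "map (m' \<circ> g) w = map m w" by simp
    then show ?thesis by (simp add: map_eq_conv)
  qed
  have mg: "m' \<circ> g \<in> Sb" using m' g by (auto simp: Perm_def intro: Sb_comp)
  have gen2: "((m' \<circ> g, w), (m, w)) \<in> F_gen X word_act"
    unfolding F_gen_def using mg m w sup agree by blast
  let ?R = "F_gen X word_act \<union> (F_gen X word_act)\<inverse>"
  have "((m, w), (m' \<circ> g, w)) \<in> ?R" using gen2 by auto
  moreover have "((m' \<circ> g, w), (m', w')) \<in> ?R" using gen1 by auto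
  ultimately have "((m, w), (m', w')) \<in> ?R\<^sup>+" by (rule trancl_into_trancl[OF r_into_trancl])
  then show ?thesis unfolding F_rel_def by auto
qed


lemma main_generic:
  assumes inf: "infinite (UNIV :: 'a set)"
    and Xd: "\<forall>w\<in>X. distinct w" and cl: "\<forall>g\<in>Perm. \<forall>x\<in>X. map g x \<in> X"
    and Ysurj: "\<forall>v\<in>Y. \<exists>w\<in>X. length w = length v"
    and Yin: "\<forall>m\<in>Sb. \<forall>w\<in>X. map m w \<in> Y"
  shows "sb_iso (F_carrier (X :: 'a list set) word_act) (F_act X word_act) Y word_act"
proof -
  let ?R = "F_rel X word_act"
  let ?h = "\<lambda>p::('a \<Rightarrow> 'a) \<times> 'a list. map (fst p) (snd p)"
  define f where "f c = ?h (SOME p. p \<in> c)" for c :: "(('a \<Rightarrow> 'a) \<times> 'a list) set"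
  have eqv: "equiv (Sb \<times> X) ?R" by (rule F_rel_equiv[OF cl])
  have inv: "(p, q) \<in> ?R \<Longrightarrow> ?h p = ?h q" for p q using F_rel_inv[OF inf] by blast
  have fcls: "f (?R `` {p}) = ?h p" if "p \<in> Sb \<times> X" for p
  proof -
    have "p \<in> ?R `` {p}" using eqv that by (meson equiv_class_self)
    then have "(SOME q. q \<in> ?R `` {p}) \<in> ?R `` {p}" by (rule someI)
    then show ?thesis unfolding f_def using inv by auto
  qed
  have car: "c \<in> F_carrier X word_act \<longleftrightarrow> (\<exists>p\<in>Sb \<times> X. c = ?R `` {p})" for c
    unfolding F_carrier_def quotient_def by auto
  show ?thesis unfolding sb_iso_def
  proof (intro exI conjI ballI)
    show "bij_betw f (F_carrier X word_act) Y"
    proof (rule bij_betw_imageI)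
      show "inj_on f (F_carrier X word_act)"
      proof (rule inj_onI)
        fix c1 c2 assume c1: "c1 \<in> F_carrier X word_act" and c2: "c2 \<in> F_carrier X word_act"
          and e: "f c1 = f c2"
        obtain p1 where p1: "p1 \<in> Sb \<times> X" "c1 = ?R `` {p1}" using car[THEN iffD1, OF c1] by blast
        obtain p2 where p2: "p2 \<in> Sb \<times> X" "c2 = ?R `` {p2}" using car[THEN iffD1, OF c2] by blast
        have "?h p1 = ?h p2" using e p1 p2 fcls by simp
        then have "(p1, p2) \<in> ?R" using F_rel_intro[OF Xd cl] p1 p2
          by (metis mem_Sigma_iff prod.collapse)
        then show "c1 = c2" using p1 p2 eqv by (simp add: equiv_class_eq)
      qed
      show "f ` F_carrier X word_act = Y"
      proof
        show "f ` F_carrier X word_act \<subseteq> Y"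
        proof
          fix y assume "y \<in> f ` F_carrier X word_act"
          then obtain c where c: "c \<in> F_carrier X word_act" "y = f c" by (rule imageE)
          then obtain p where "p \<in> Sb \<times> X" "y = f (?R `` {p})" using car[THEN iffD1, OF c(1)] by blast
          then show "y \<in> Y" using fcls Yin by (auto simp: mem_Times_iff)
        qed
        show "Y \<subseteq> f ` F_carrier X word_act"
        proof
          fix v assume v: "v \<in> Y"
          then obtain w where w: "w \<in> X" "length w = length v" using Ysurj by blast
          let ?m = "\<lambda>a. case map_of (zip w v) a of None \<Rightarrow> a | Some b \<Rightarrow> b"
          have pm: "(?m, w) \<in> Sb \<times> X" using w map_to_Sb by blast
          have fv: "f (?R `` {(?m, w)}) = v" using fcls[OF pm] map_to[of w v] w Xd by simp
          have cc: "?R `` {(?m, w)} \<in> F_carrier X word_act" using car[THEN iffD2] pm by blast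
          show "v \<in> f ` F_carrier X word_act" by (rule image_eqI[of v f "?R `` {(?m, w)}", OF fv[symmetric] cc])
        qed
      qed
    qed
  next
    fix m :: "'a \<Rightarrow> 'a" and c assume m: "m \<in> Sb" and c: "c \<in> F_carrier X word_act"
    obtain p where p: "p \<in> Sb \<times> X" "c = ?R `` {p}" using car[THEN iffD1, OF c] by blast
    have mp: "(m \<circ> fst p, snd p) \<in> Sb \<times> X" using p m by (auto simp: Sb_comp mem_Times_iff)
    have sub: "?h q = map m (?h p)" if "q \<in> F_act X word_act m c" for q
    proof -
      from that obtain r where r: "r \<in> c" "q \<in> ?R `` {(m \<circ> fst r, snd r)}"
        unfolding F_act_def by blast
      have "?h q = ?h (m \<circ> fst r, snd r)" using r(2) inv by (metis Image_singleton_iff)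
      also have "\<dots> = map m (?h r)" by simp
      also have "?h r = ?h p" using r(1) p inv by (metis Image_singleton_iff)
      finally show ?thesis .
    qed
    have "(m \<circ> fst p, snd p) \<in> F_act X word_act m c"
    proof -
      have "p \<in> c" using p eqv by (meson equiv_class_self)
      moreover have "(m \<circ> fst p, snd p) \<in> ?R `` {(m \<circ> fst p, snd p)}"
        using eqv mp by (meson equiv_class_self)
      ultimately show ?thesis unfolding F_act_def by blast
    qed
    then have "(SOME q. q \<in> F_act X word_act m c) \<in> F_act X word_act m c" by (rule someI)
    then have "f (F_act X word_act m c) = map m (?h p)" unfolding f_def using sub by blast
    moreover have "f c = ?h p" using fcls p by simp
    ultimately show "f (F_act X word_act m c) = word_act m (f c)" by (simp add: word_act_def)
  qed
qed

lemma exists_distinct: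
  assumes inf: "infinite (UNIV :: 'a set)"
  shows "\<exists>w :: 'a list. distinct w \<and> length w = n"
proof -
  obtain A :: "'a set" where A: "finite A" "card A = n"
    using infinite_arbitrarily_large[OF inf] by blast
  obtain w where "set w = A" "distinct w" using finite_distinct_list[OF A(1)] by blast
  then show ?thesis using A distinct_card by metis
qed

lemma distinct_map_perm: "g \<in> Perm \<Longrightarrow> distinct x \<Longrightarrow> distinct (map g x)"
proof -
  assume "g \<in> Perm" "distinct x"
  then have "inj g" by (simp add: Perm_def bij_is_inj)
  then have "inj_on g (set x)" by (rule inj_on_subset) simp
  then show ?thesis using \<open>distinct x\<close> by (simp add: distinct_map)
qed

theorem mainTheorem8:
  assumes "infinite (UNIV :: ('a::countable) set)"
  shows "(\<forall>n::nat. sb_iso (F_carrier (A_dist n :: 'a list set) word_act) (F_act (A_dist n) word_act)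
                       (A_pow n) word_act)
       \<and> sb_iso (F_carrier (A_dist_star :: 'a list set) word_act) (F_act A_dist_star word_act)
                 A_star word_act"
proof (intro conjI allI)
  fix n
  show "sb_iso (F_carrier (A_dist n :: 'a list set) word_act) (F_act (A_dist n) word_act)
                       (A_pow n) word_act"
  proof (rule main_generic[OF assms])
    show "\<forall>v\<in>A_pow n. \<exists>w\<in>(A_dist n :: 'a list set). length w = length v"
      using exists_distinct[OF assms] by (auto simp: A_pow_def A_dist_def)
  qed (auto simp: A_dist_def A_pow_def distinct_map_perm)
next
  show "sb_iso (F_carrier (A_dist_star :: 'a list set) word_act) (F_act A_dist_star word_act)
                 A_star word_act"
  proof (rule main_generic[OF assms])
    show "\<forall>v\<in>A_star. \<exists>w\<in>(A_dist_star :: 'a list set). length w = length v"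
      using exists_distinct[OF assms] by (auto simp: A_dist_star_def)
  qed (auto simp: A_dist_star_def A_star_def distinct_map_perm)
qed

end
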